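(* Let $A\overset{i}{\to}U\overset{j}{\to}S$ be an extension of a semilattice of groups $A$ by an inverse semigroup $S$, $\rho$ a transversal of $j$, and $\Lambda=(\alpha,\lambda,f)$ the twisted $S$-module structure on $A$ induced by $\rho$. Then $\Lambda$ is a Sieben twisted $S$-module structure, i.e. $f(s,e)=\alpha(ses^{-1})$ and $f(e,s)=\alpha(ess^{-1})$ for all $s\in S$ and $e\in E(S)$, if and only if $\rho$ is order-preserving ($s\le t\Rightarrow\rho(s)\le\rho(t)$ in the natural partial orders).
   Context: A semilattice of groups is an inverse semigroup $A$ whose idempotents are central; $A_e=\{a: aa^{-1}=a^{-1}a=e\}$. An extension of $A$ by $S$ is an inverse semigroup $U$ with a monomorphism $i:A\to U$ and an idempotent-separating epimorphism $j:U\to S$ with $i(A)=j^{-1}(E(S))$. A transversal of $j$ is $\rho:S\to U$ with $j\circ\rho=\mathrm{id}_S$ and $\rho(E(S))\subseteq E(U)$. The induced structure: $\alpha=i^{-1}\circ\rho|_{E(S)}$, $\lambda_s(a)=i^{-1}(\rho(s)i(a)\rho(s)^{-1})$, and $f(s,t)$ the unique element of $A_{\alpha(stt^{-1}s^{-1})}$ with $\rho(s)\rho(t)=i(f(s,t))\rho(st)$. *)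

theory Defs
  imports Main
begin

definition semigroup_on :: "'a set \<Rightarrow> ('a \<Rightarrow> 'a \<Rightarrow> 'a) \<Rightarrow> bool" where
  "semigroup_on S m \<longleftrightarrow> (\<forall>a\<in>S. \<forall>b\<in>S. m a b \<in> S) \<and>
     (\<forall>a\<in>S. \<forall>b\<in>S. \<forall>c\<in>S. m (m a b) c = m a (m b c))"

definition inverse_semigroup :: "'a set \<Rightarrow> ('a \<Rightarrow> 'a \<Rightarrow> 'a) \<Rightarrow> bool" where
  "inverse_semigroup S m \<longleftrightarrow> semigroup_on S m \<and>
     (\<forall>a\<in>S. \<exists>!b. b \<in> S \<and> m (m a b) a = a \<and> m (m b a) b = b)"

definition sinv :: "'a set \<Rightarrow> ('a \<Rightarrow> 'a \<Rightarrow> 'a) \<Rightarrow> 'a \<Rightarrow> 'a" where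
  "sinv S m a = (THE b. b \<in> S \<and> m (m a b) a = a \<and> m (m b a) b = b)"

definition idems :: "'a set \<Rightarrow> ('a \<Rightarrow> 'a \<Rightarrow> 'a) \<Rightarrow> 'a set" where
  "idems S m = {e \<in> S. m e e = e}"

definition nat_le :: "'a set \<Rightarrow> ('a \<Rightarrow> 'a \<Rightarrow> 'a) \<Rightarrow> 'a \<Rightarrow> 'a \<Rightarrow> bool" where
  "nat_le S m s t \<longleftrightarrow> s \<in> S \<and> t \<in> S \<and> (\<exists>e\<in>idems S m. s = m e t)"

definition semilattice_of_groups :: "'a set \<Rightarrow> ('a \<Rightarrow> 'a \<Rightarrow> 'a) \<Rightarrow> bool" where
  "semilattice_of_groups A m \<longleftrightarrow> inverse_semigroup A m \<and>
     (\<forall>e\<in>idems A m. \<forall>a\<in>A. m e a = m a e)"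

definition group_comp :: "'a set \<Rightarrow> ('a \<Rightarrow> 'a \<Rightarrow> 'a) \<Rightarrow> 'a \<Rightarrow> 'a set" where
  "group_comp A m e = {a \<in> A. m a (sinv A m a) = e \<and> m (sinv A m a) a = e}"

definition shom :: "'a set \<Rightarrow> ('a \<Rightarrow> 'a \<Rightarrow> 'a) \<Rightarrow> 'b set \<Rightarrow> ('b \<Rightarrow> 'b \<Rightarrow> 'b) \<Rightarrow> ('a \<Rightarrow> 'b) \<Rightarrow> bool" where
  "shom S m T n h \<longleftrightarrow> (\<forall>a\<in>S. h a \<in> T) \<and> (\<forall>a\<in>S. \<forall>b\<in>S. h (m a b) = n (h a) (h b))"

definition is_extension ::
  "'a set \<Rightarrow> ('a \<Rightarrow> 'a \<Rightarrow> 'a) \<Rightarrow> 'u set \<Rightarrow> ('u \<Rightarrow> 'u \<Rightarrow> 'u) \<Rightarrow> 's set \<Rightarrow> ('s \<Rightarrow> 's \<Rightarrow> 's)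
   \<Rightarrow> ('a \<Rightarrow> 'u) \<Rightarrow> ('u \<Rightarrow> 's) \<Rightarrow> bool" where
  "is_extension A mA U mU S mS i j \<longleftrightarrow>
     semilattice_of_groups A mA \<and> inverse_semigroup U mU \<and> inverse_semigroup S mS \<and>
     shom A mA U mU i \<and> inj_on i A \<and>
     shom U mU S mS j \<and> j ` U = S \<and>
     (\<forall>e\<in>idems U mU. \<forall>f\<in>idems U mU. j e = j f \<longrightarrow> e = f) \<and>
     i ` A = {u \<in> U. j u \<in> idems S mS}"

definition is_transversal ::
  "'u set \<Rightarrow> ('u \<Rightarrow> 'u \<Rightarrow> 'u) \<Rightarrow> 's set \<Rightarrow> ('s \<Rightarrow> 's \<Rightarrow> 's) \<Rightarrow> ('u \<Rightarrow> 's) \<Rightarrow> ('s \<Rightarrow> 'u) \<Rightarrow> bool" where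
  "is_transversal U mU S mS j \<rho> \<longleftrightarrow>
     (\<forall>s\<in>S. \<rho> s \<in> U \<and> j (\<rho> s) = s) \<and> (\<forall>e\<in>idems S mS. \<rho> e \<in> idems U mU)"

definition ind_alpha :: "'a set \<Rightarrow> ('a \<Rightarrow> 'u) \<Rightarrow> ('s \<Rightarrow> 'u) \<Rightarrow> 's \<Rightarrow> 'a" where
  "ind_alpha A i \<rho> e = the_inv_into A i (\<rho> e)"

definition ind_lambda ::
  "'a set \<Rightarrow> 'u set \<Rightarrow> ('u \<Rightarrow> 'u \<Rightarrow> 'u) \<Rightarrow> ('a \<Rightarrow> 'u) \<Rightarrow> ('s \<Rightarrow> 'u) \<Rightarrow> 's \<Rightarrow> 'a \<Rightarrow> 'a" where
  "ind_lambda A U mU i \<rho> s a = the_inv_into A i (mU (mU (\<rho> s) (i a)) (sinv U mU (\<rho> s)))"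

definition ind_f ::
  "'a set \<Rightarrow> ('a \<Rightarrow> 'a \<Rightarrow> 'a) \<Rightarrow> 'u set \<Rightarrow> ('u \<Rightarrow> 'u \<Rightarrow> 'u) \<Rightarrow> 's set \<Rightarrow> ('s \<Rightarrow> 's \<Rightarrow> 's)
   \<Rightarrow> ('a \<Rightarrow> 'u) \<Rightarrow> ('s \<Rightarrow> 'u) \<Rightarrow> 's \<Rightarrow> 's \<Rightarrow> 'a" where
  "ind_f A mA U mU S mS i \<rho> s t =
     (THE a. a \<in> group_comp A mA
               (ind_alpha A i \<rho> (mS (mS (mS s t) (sinv S mS t)) (sinv S mS s))) \<and>
             mU (\<rho> s) (\<rho> t) = mU (i a) (\<rho> (mS s t)))"

end

theory Submission
  imports Defs
begin


locale invsg =
  fixes S :: "'a set" and m :: "'a \<Rightarrow> 'a \<Rightarrow> 'a"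
  assumes isg: "inverse_semigroup S m"
begin

lemma closed[simp]: "a \<in> S \<Longrightarrow> b \<in> S \<Longrightarrow> m a b \<in> S"
  using isg unfolding inverse_semigroup_def semigroup_on_def by blast

lemma assoc[simp]: "a \<in> S \<Longrightarrow> b \<in> S \<Longrightarrow> c \<in> S \<Longrightarrow> m (m a b) c = m a (m b c)"
  using isg unfolding inverse_semigroup_def semigroup_on_def by blast

lemma ex1: "a \<in> S \<Longrightarrow> \<exists>!b. b \<in> S \<and> m (m a b) a = a \<and> m (m b a) b = b"
  using isg unfolding inverse_semigroup_def by blast

lemma inv_props: "a \<in> S \<Longrightarrow> sinv S m a \<in> S \<and> m (m a (sinv S m a)) a = a \<and> m (m (sinv S m a) a) (sinv S m a) = sinv S m a"
  unfolding sinv_def by (rule theI'[OF ex1])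

lemma inv_in[simp]: "a \<in> S \<Longrightarrow> sinv S m a \<in> S" using inv_props by blast
lemma inv1: "a \<in> S \<Longrightarrow> m a (m (sinv S m a) a) = a" using inv_props by force
lemma inv2: "a \<in> S \<Longrightarrow> m (sinv S m a) (m a (sinv S m a)) = sinv S m a" using inv_props by force

lemma inv1y[simp]: "a \<in> S \<Longrightarrow> y \<in> S \<Longrightarrow> m a (m (sinv S m a) (m a y)) = m a y"
  using inv1[of a] by (metis assoc closed inv_in)
lemma inv2y[simp]: "a \<in> S \<Longrightarrow> y \<in> S \<Longrightarrow> m (sinv S m a) (m a (m (sinv S m a) y)) = m (sinv S m a) y"
  using inv2[of a] by (metis assoc closed inv_in)

lemma inv_unique: "a \<in> S \<Longrightarrow> b \<in> S \<Longrightarrow> m (m a b) a = a \<Longrightarrow> m (m b a) b = b \<Longrightarrow> sinv S m a = b"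
  unfolding sinv_def by (rule the1_equality[OF ex1]) auto

lemma idemsD: "e \<in> idems S m \<Longrightarrow> e \<in> S" "e \<in> idems S m \<Longrightarrow> m e e = e"
  by (auto simp: idems_def)

lemma idem2: "e \<in> idems S m \<Longrightarrow> y \<in> S \<Longrightarrow> m e (m e y) = m e y"
  by (metis assoc idemsD)

lemma inv_idem: "e \<in> idems S m \<Longrightarrow> sinv S m e = e"
  by (rule inv_unique) (auto simp: idemsD)

lemma idem_comm: assumes e: "e \<in> idems S m" and f: "f \<in> idems S m" shows "m e f = m f e"
proof -
  have eS: "e \<in> S" and fS: "f \<in> S" and ee: "m e e = e" and ff: "m f f = f" using e f by (auto simp: idemsD)
  have gen: "m x y \<in> idems S m" if x: "x \<in> idems S m" and y: "y \<in> idems S m" for x y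
  proof -
    have xS: "x \<in> S" and yS: "y \<in> S" and xx: "m x x = x" and yy: "m y y = y" using x y by (auto simp: idemsD)
    define z where "z = sinv S m (m x y)"
    have zS: "z \<in> S" using xS yS z_def by simp
    have i1: "m (m x y) (m z (m x y)) = m x y" using inv1[of "m x y"] xS yS z_def by simp
    have i2: "m z (m (m x y) z) = z" using inv2[of "m x y"] xS yS z_def by simp
    have i2w: "m z (m x (m y (m z w))) = m z w" if "w \<in> S" for w
      using arg_cong[OF i2, of "\<lambda>t. m t w"] that xS yS zS by simp
    have "sinv S m (m x y) = m y (m z x)"
    proof (rule inv_unique)
      show "m (m (m x y) (m y (m z x))) (m x y) = m x y"
        using i1 xS yS zS idem2[OF x] idem2[OF y] by simp
      show "m (m (m y (m z x)) (m x y)) (m y (m z x)) = m y (m z x)"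
        using i2w xS yS zS idem2[OF x] idem2[OF y] by (simp add: yy xx)
    qed (use xS yS zS in auto)
    hence zz: "z = m y (m z x)" using z_def by simp
    have "m z z = z"
    proof -
      have "m z z = m (m y (m z x)) (m y (m z x))" using zz by simp
      also have "\<dots> = m y (m z (m (m x y) (m z x)))" using xS yS zS by simp
      also have "\<dots> = m y (m (m z (m (m x y) z)) x)" using xS yS zS by simp
      also have "\<dots> = z" using i2 zz by simp
      finally show ?thesis .
    qed
    hence "z \<in> idems S m" using zS by (simp add: idems_def)
    hence "sinv S m z = z" by (rule inv_idem)
    moreover have "sinv S m z = m x y"
      by (rule inv_unique) (use i1 i2 xS yS zS z_def in auto)
    ultimately have "m x y = z" by simp
    then show ?thesis using \<open>z \<in> idems S m\<close> by simp
  qed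
  have ef: "m e f \<in> idems S m" and fe: "m f e \<in> idems S m" using gen e f by auto
  have "sinv S m (m e f) = m f e"
  proof (rule inv_unique)
    show "m (m (m e f) (m f e)) (m e f) = m e f"
      using eS fS idem2[OF e] idem2[OF f] idemsD(2)[OF ef] by (simp add: ff)
    show "m (m (m f e) (m e f)) (m f e) = m f e"
      using eS fS idem2[OF e] idem2[OF f] idemsD(2)[OF fe] by (simp add: ee)
  qed (use eS fS in auto)
  then show ?thesis using inv_idem[OF ef] by simp
qed

lemma idem_mult: "e \<in> idems S m \<Longrightarrow> f \<in> idems S m \<Longrightarrow> m e f \<in> idems S m"
proof -
  assume e: "e \<in> idems S m" and f: "f \<in> idems S m"
  have eS: "e \<in> S" and fS: "f \<in> S" and ff: "m f f = f" using e f by (auto simp: idemsD)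
  have "m (m e f) (m e f) = m e (m (m f e) f)" using eS fS by simp
  also have "\<dots> = m e (m (m e f) f)" using idem_comm[OF e f] by simp
  also have "\<dots> = m e f" using eS fS idem2[OF e] ff by simp
  finally show ?thesis using eS fS unfolding idems_def by simp
qed

lemma aa_idem: "a \<in> S \<Longrightarrow> m a (sinv S m a) \<in> idems S m"
  unfolding idems_def using inv1[of a] by simp

lemma a'a_idem: "a \<in> S \<Longrightarrow> m (sinv S m a) a \<in> idems S m"
  unfolding idems_def using inv2[of a] by simp

lemma inv_inv: "a \<in> S \<Longrightarrow> sinv S m (sinv S m a) = a"
  by (rule inv_unique) (auto simp: inv1 inv2)

lemma inv_mult: assumes a: "a \<in> S" and b: "b \<in> S"
  shows "sinv S m (m a b) = m (sinv S m b) (sinv S m a)"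
proof (rule inv_unique)
  have c: "m (m b (sinv S m b)) (m (sinv S m a) a) = m (m (sinv S m a) a) (m b (sinv S m b))"
    using idem_comm aa_idem a'a_idem a b by blast
  have c': "m b (m (sinv S m b) (m (sinv S m a) a)) = m (sinv S m a) (m a (m b (sinv S m b)))"
    using c a b by simp
  show "m (m (m a b) (m (sinv S m b) (sinv S m a))) (m a b) = m a b"
  proof -
    have "m (m (m a b) (m (sinv S m b) (sinv S m a))) (m a b) = m a (m (m b (m (sinv S m b) (m (sinv S m a) a))) b)"
      using a b by simp
    also have "\<dots> = m a (m (m (sinv S m a) (m a (m b (sinv S m b)))) b)" using c' by simp
    also have "\<dots> = m (m a (m (sinv S m a) a)) (m b (m (sinv S m b) b))" using a b by simp
    also have "\<dots> = m a b" using inv1 a b by simp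
    finally show ?thesis .
  qed
  have d: "m (m (sinv S m a) a) (m b (sinv S m b)) = m (m b (sinv S m b)) (m (sinv S m a) a)"
    using c by simp
  show "m (m (m (sinv S m b) (sinv S m a)) (m a b)) (m (sinv S m b) (sinv S m a)) = m (sinv S m b) (sinv S m a)"
  proof -
    have "m (m (m (sinv S m b) (sinv S m a)) (m a b)) (m (sinv S m b) (sinv S m a))
        = m (sinv S m b) (m (m (m (sinv S m a) a) (m b (sinv S m b))) (sinv S m a))"
      using a b by simp
    also have "\<dots> = m (sinv S m b) (m (m (m b (sinv S m b)) (m (sinv S m a) a)) (sinv S m a))" using d by simp
    also have "\<dots> = m (m (sinv S m b) (m b (sinv S m b))) (m (sinv S m a) (m a (sinv S m a)))" using a b by simp
    also have "\<dots> = m (sinv S m b) (sinv S m a)" using inv2 a b by simp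
    finally show ?thesis .
  qed
qed (use a b in auto)

lemma le_left: assumes e: "e \<in> idems S m" and y: "y \<in> S"
  shows "m e y = m (m (m e y) (sinv S m (m e y))) y"
proof -
  have eS: "e \<in> S" using e idemsD by auto
  have "sinv S m (m e y) = m (sinv S m y) e" using inv_mult eS y inv_idem e by simp
  then have "m (m (m e y) (sinv S m (m e y))) y = m (m e (m y (sinv S m y))) (m e y)" using eS y by simp
  also have "\<dots> = m e (m (m (m y (sinv S m y)) e) y)" using eS y by simp
  also have "\<dots> = m e (m (m e (m y (sinv S m y))) y)" using idem_comm[OF e aa_idem[OF y]] by simp
  also have "\<dots> = m e y" using eS y idem2[OF e] inv1[OF y] by simp
  finally show ?thesis by (rule sym)
qed

lemma le_right: assumes e: "e \<in> idems S m" and y: "y \<in> S"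
  shows "m e y = m y (m (sinv S m (m e y)) (m e y))"
proof -
  have eS: "e \<in> S" using e idemsD by auto
  have "sinv S m (m e y) = m (sinv S m y) e" using inv_mult eS y inv_idem e by simp
  then have "m y (m (sinv S m (m e y)) (m e y)) = m (m y (sinv S m y)) (m e y)" using eS y idem2[OF e] by simp
  also have "\<dots> = m (m (m y (sinv S m y)) e) y" using eS y by simp
  also have "\<dots> = m (m e (m y (sinv S m y))) y" using idem_comm[OF e aa_idem[OF y]] by simp
  also have "\<dots> = m e y" using eS y inv1[OF y] by simp
  finally show ?thesis by (rule sym)
qed

end

lemma hom_inv:
  assumes "inverse_semigroup S m" "inverse_semigroup T n" "shom S m T n h" "a \<in> S"
  shows "h (sinv S m a) = sinv T n (h a)"
proof -
  interpret A: invsg S m by standard (fact assms(1))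
  interpret B: invsg T n by standard (fact assms(2))
  have hm: "\<And>x y. x \<in> S \<Longrightarrow> y \<in> S \<Longrightarrow> h (m x y) = n (h x) (h y)" and hS: "\<And>x. x \<in> S \<Longrightarrow> h x \<in> T"
    using assms(3) unfolding shom_def by auto
  show ?thesis
  proof (rule B.inv_unique[symmetric])
    show "n (n (h a) (h (sinv S m a))) (h a) = h a"
      using assms(4) by (metis A.assoc A.closed A.inv1 A.inv_in hm)
    show "n (n (h (sinv S m a)) (h a)) (h (sinv S m a)) = h (sinv S m a)"
      using assms(4) by (metis A.assoc A.closed A.inv2 A.inv_in hm)
  qed (use assms(4) hS in auto)
qed

lemma hom_idem:
  assumes "shom S m T n h" "e \<in> idems S m" shows "h e \<in> idems T n"
  using assms unfolding shom_def idems_def by (metis (mono_tags, lifting) mem_Collect_eq)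



locale extc =
  fixes A :: "'a set" and mA :: "'a \<Rightarrow> 'a \<Rightarrow> 'a"
    and U :: "'u set" and mU :: "'u \<Rightarrow> 'u \<Rightarrow> 'u"
    and S :: "'s set" and mS :: "'s \<Rightarrow> 's \<Rightarrow> 's"
    and i :: "'a \<Rightarrow> 'u" and j :: "'u \<Rightarrow> 's" and \<rho> :: "'s \<Rightarrow> 'u"
  assumes ext: "is_extension A mA U mU S mS i j"
    and tr: "is_transversal U mU S mS j \<rho>"
begin

sublocale AA: invsg A mA using ext unfolding is_extension_def semilattice_of_groups_def by unfold_locales blast
sublocale UU: invsg U mU using ext unfolding is_extension_def by unfold_locales blast
sublocale SS: invsg S mS using ext unfolding is_extension_def by unfold_locales blast

lemma i_in: "a \<in> A \<Longrightarrow> i a \<in> U" using ext unfolding is_extension_def shom_def by blast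
lemma i_m: "a \<in> A \<Longrightarrow> b \<in> A \<Longrightarrow> i (mA a b) = mU (i a) (i b)" using ext unfolding is_extension_def shom_def by blast
lemma i_inj: "inj_on i A" using ext unfolding is_extension_def by blast
lemma j_in: "u \<in> U \<Longrightarrow> j u \<in> S" using ext unfolding is_extension_def shom_def by blast
lemma j_m: "u \<in> U \<Longrightarrow> v \<in> U \<Longrightarrow> j (mU u v) = mS (j u) (j v)" using ext unfolding is_extension_def shom_def by blast
lemma sep: "e \<in> idems U mU \<Longrightarrow> f \<in> idems U mU \<Longrightarrow> j e = j f \<Longrightarrow> e = f" using ext unfolding is_extension_def by blast
lemma iA: "i ` A = {u \<in> U. j u \<in> idems S mS}" using ext unfolding is_extension_def by blast
lemma j_inv: "u \<in> U \<Longrightarrow> j (sinv U mU u) = sinv S mS (j u)"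
  using ext hom_inv[of U mU S mS j u] unfolding is_extension_def by blast
lemma i_inv: "a \<in> A \<Longrightarrow> i (sinv A mA a) = sinv U mU (i a)"
  using ext hom_inv[of A mA U mU i a] unfolding is_extension_def semilattice_of_groups_def by blast
lemma rho_in: "s \<in> S \<Longrightarrow> \<rho> s \<in> U" using tr unfolding is_transversal_def by blast
lemma j_rho: "s \<in> S \<Longrightarrow> j (\<rho> s) = s" using tr unfolding is_transversal_def by blast
lemma rho_idem: "e \<in> idems S mS \<Longrightarrow> \<rho> e \<in> idems U mU" using tr unfolding is_transversal_def by blast

lemma G: assumes xE: "x \<in> idems S mS" and uE: "u \<in> idems U mU" and ju: "j u = x" shows "\<rho> x = u"
proof (rule sep[OF rho_idem[OF xE] uE])
  show "j (\<rho> x) = j u" using j_rho[OF SS.idemsD(1)[OF xE]] ju by simp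
qed

lemma alpha: assumes "x \<in> idems S mS" shows "ind_alpha A i \<rho> x \<in> A" "i (ind_alpha A i \<rho> x) = \<rho> x"
proof -
  have "\<rho> x \<in> i ` A" using iA assms rho_in j_rho SS.idemsD by auto
  then show "ind_alpha A i \<rho> x \<in> A" "i (ind_alpha A i \<rho> x) = \<rho> x"
    unfolding ind_alpha_def by (rule the_inv_into_into[OF i_inj _ subset_refl], rule f_the_inv_into_f[OF i_inj])
qed

lemma alpha_i: assumes aA: "a \<in> A" and h: "i a = \<rho> x" shows "ind_alpha A i \<rho> x = a"
  unfolding ind_alpha_def h[symmetric] by (rule the_inv_into_f_f[OF i_inj aA])

definition Q where "Q s t a \<longleftrightarrow> a \<in> group_comp A mA
               (ind_alpha A i \<rho> (mS (mS (mS s t) (sinv S mS t)) (sinv S mS s))) \<and>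
             mU (\<rho> s) (\<rho> t) = mU (i a) (\<rho> (mS s t))"

lemma f_Q: "ind_f A mA U mU S mS i \<rho> s t = (THE a. Q s t a)"
  unfolding ind_f_def Q_def ..

lemma idx: "s \<in> S \<Longrightarrow> t \<in> S \<Longrightarrow> mS (mS (mS s t) (sinv S mS t)) (sinv S mS s) = mS (mS s t) (sinv S mS (mS s t))"
  by (simp add: SS.inv_mult)

lemma Q_unique: assumes s: "s \<in> S" and t: "t \<in> S"
  shows "\<exists>!a. Q s t a"
proof -
  define u where "u = mU (\<rho> s) (\<rho> t)"
  define v where "v = \<rho> (mS s t)"
  define x where "x = mS (mS s t) (sinv S mS (mS s t))"
  have uU: "u \<in> U" and vU: "v \<in> U" using u_def v_def s t rho_in by auto
  have xE: "x \<in> idems S mS" unfolding x_def by (rule SS.aa_idem) (simp add: s t)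
  have ju: "j u = mS s t" using u_def s t j_m rho_in j_rho by simp
  have jv: "j v = mS s t" using v_def s t j_rho by simp
  have uu: "mU u (sinv U mU u) = mU v (sinv U mU v)"
    using sep[OF UU.aa_idem[OF uU] UU.aa_idem[OF vU]] uU vU j_m j_inv ju jv by simp
  have uu2: "mU (sinv U mU u) u = mU (sinv U mU v) v"
    using sep[OF UU.a'a_idem[OF uU] UU.a'a_idem[OF vU]] uU vU j_m j_inv ju jv by simp
  have rx: "\<rho> x = mU v (sinv U mU v)"
    using G[OF xE UU.aa_idem[OF vU]] vU j_m j_inv jv x_def by simp
  define w where "w = mU u (sinv U mU v)"
  have wU: "w \<in> U" using w_def uU vU by simp
  have jw: "j w = x" using w_def uU vU j_m j_inv ju jv x_def by simp
  have "w \<in> i ` A" using iA wU jw xE by simp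
  then obtain a where aA: "a \<in> A" and ia: "i a = w" by blast
  have ia': "i (sinv A mA a) = mU v (sinv U mU u)"
    using i_inv[OF aA] ia w_def UU.inv_mult uU vU UU.inv_inv by simp
  have e1: "i (mA a (sinv A mA a)) = \<rho> x"
  proof -
    have "i (mA a (sinv A mA a)) = mU u (mU (sinv U mU v) (mU v (sinv U mU u)))"
      using i_m aA ia ia' w_def uU vU by simp
    also have "\<dots> = mU u (mU (sinv U mU u) (mU u (sinv U mU u)))"
      using arg_cong[OF uu2, of "\<lambda>z. mU z (sinv U mU u)"] uU vU by simp
    also have "\<dots> = \<rho> x" using uU by (simp add: rx uu[symmetric])
    finally show ?thesis .
  qed
  have e2: "i (mA (sinv A mA a) a) = \<rho> x"
  proof -
    have "i (mA (sinv A mA a) a) = mU v (mU (sinv U mU u) (mU u (sinv U mU v)))"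
      using i_m aA ia ia' w_def uU vU by simp
    also have "\<dots> = mU v (mU (sinv U mU v) (mU v (sinv U mU v)))"
      using arg_cong[OF uu2, of "\<lambda>z. mU z (sinv U mU v)"] uU vU by simp
    also have "\<dots> = \<rho> x" using vU rx by simp
    finally show ?thesis .
  qed
  have xidx: "mS (mS (mS s t) (sinv S mS t)) (sinv S mS s) = x" using idx s t x_def by simp
  have Qa: "Q s t a"
    unfolding Q_def group_comp_def xidx
  proof (intro conjI CollectI)
    show "a \<in> A" by fact
    show "mA a (sinv A mA a) = ind_alpha A i \<rho> x" using alpha_i[OF _ e1] aA by simp
    show "mA (sinv A mA a) a = ind_alpha A i \<rho> x" using alpha_i[OF _ e2] aA by simp
    show "mU (\<rho> s) (\<rho> t) = mU (i a) (\<rho> (mS s t))"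
    proof -
      have "mU (i a) (\<rho> (mS s t)) = mU u (mU (sinv U mU v) v)" using ia w_def v_def uU vU by simp
      also have "\<dots> = u" using uu2[symmetric] uU UU.inv1 by simp
      finally show ?thesis using u_def by simp
    qed
  qed
  have uniq: "b = a" if Qb: "Q s t b" for b
  proof -
    have bA: "b \<in> A" and b2: "mA (sinv A mA b) b = ind_alpha A i \<rho> x"
      and beq: "u = mU (i b) v"
      using Qb unfolding Q_def group_comp_def xidx u_def v_def by auto
    have "i b = i (mA b (mA (sinv A mA b) b))" using AA.inv1 bA by simp
    also have "\<dots> = mU (i b) (\<rho> x)" using i_m bA b2 alpha xE by simp
    also have "\<dots> = mU u (sinv U mU v)" using rx beq bA i_in vU by simp
    also have "\<dots> = i a" using ia w_def by simp
    finally show ?thesis using i_inj bA aA inj_on_def by metis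
  qed
  show ?thesis using Qa uniq by blast
qed

lemma L: assumes s: "s \<in> S" and t: "t \<in> S"
  shows "ind_f A mA U mU S mS i \<rho> s t = ind_alpha A i \<rho> (mS (mS (mS s t) (sinv S mS t)) (sinv S mS s))
     \<longleftrightarrow> mU (\<rho> s) (\<rho> t) = \<rho> (mS s t)"
proof -
  define x where "x = mS (mS s t) (sinv S mS (mS s t))"
  have xidx: "mS (mS (mS s t) (sinv S mS t)) (sinv S mS s) = x" using idx[OF s t] unfolding x_def .
  have xE: "x \<in> idems S mS" unfolding x_def by (rule SS.aa_idem) (simp add: s t)
  define b where "b = ind_alpha A i \<rho> x"
  have bA: "b \<in> A" unfolding b_def by (rule alpha(1)[OF xE])
  have ib: "i b = \<rho> x" unfolding b_def by (rule alpha(2)[OF xE])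
  have rxE: "\<rho> x \<in> idems U mU" using rho_idem xE by simp
  have "i (mA b b) = i b" unfolding i_m[OF bA bA] ib by (rule UU.idemsD(2)[OF rxE])
  hence bb: "mA b b = b" by (rule inj_onD[OF i_inj _ AA.closed[OF bA bA] bA])
  hence bE: "b \<in> idems A mA" using bA unfolding idems_def by blast
  have sb: "sinv A mA b = b" by (rule AA.inv_idem[OF bE])
  have stS: "mS s t \<in> S" using s t by simp
  have stU: "\<rho> (mS s t) \<in> U" using rho_in[OF stS] .
  have jx: "j (mU (\<rho> (mS s t)) (sinv U mU (\<rho> (mS s t)))) = x"
    unfolding j_m[OF stU UU.inv_in[OF stU]] j_inv[OF stU] j_rho[OF stS] x_def ..
  have rx: "\<rho> x = mU (\<rho> (mS s t)) (sinv U mU (\<rho> (mS s t)))"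
    by (rule G[OF xE UU.aa_idem[OF stU] jx])
  have rxst: "mU (i b) (\<rho> (mS s t)) = \<rho> (mS s t)"
    unfolding ib rx using stU UU.inv1[OF stU] by simp
  have Qb: "Q s t b \<longleftrightarrow> mU (\<rho> s) (\<rho> t) = \<rho> (mS s t)"
    unfolding Q_def group_comp_def xidx b_def[symmetric] using bA bb sb rxst by simp
  have "ind_f A mA U mU S mS i \<rho> s t = b \<longleftrightarrow> Q s t b"
    unfolding f_Q
  proof
    assume h: "(THE a. Q s t a) = b"
    show "Q s t b" using theI'[OF Q_unique[OF s t]] unfolding h .
  next
    assume "Q s t b" then show "(THE a. Q s t a) = b" by (rule the1_equality[OF Q_unique[OF s t]])
  qed
  then show ?thesis unfolding xidx b_def[symmetric] using Qb by simp
qed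

lemma L1: assumes s: "s \<in> S" and e: "e \<in> idems S mS"
  shows "ind_f A mA U mU S mS i \<rho> s e = ind_alpha A i \<rho> (mS (mS s e) (sinv S mS s))
     \<longleftrightarrow> mU (\<rho> s) (\<rho> e) = \<rho> (mS s e)"
proof -
  have eS: "e \<in> S" using e SS.idemsD by auto
  have "mS (mS (mS s e) (sinv S mS e)) (sinv S mS s) = mS (mS s e) (sinv S mS s)"
    using SS.inv_idem[OF e] SS.idem2[OF e] s eS by simp
  then show ?thesis using L[OF s eS] by simp
qed

lemma L2: assumes s: "s \<in> S" and e: "e \<in> idems S mS"
  shows "ind_f A mA U mU S mS i \<rho> e s = ind_alpha A i \<rho> (mS (mS e s) (sinv S mS s))
     \<longleftrightarrow> mU (\<rho> e) (\<rho> s) = \<rho> (mS e s)"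
proof -
  have eS: "e \<in> S" using e SS.idemsD by auto
  have c: "mS (mS s (sinv S mS s)) e = mS e (mS s (sinv S mS s))"
    using SS.idem_comm[OF SS.aa_idem[OF s] e] .
  have "mS (mS (mS e s) (sinv S mS s)) (sinv S mS e) = mS e (mS (mS s (sinv S mS s)) e)"
    using SS.inv_idem[OF e] s eS by simp
  also have "\<dots> = mS (mS e s) (sinv S mS s)" using c SS.idem2[OF e] s eS by simp
  finally show ?thesis using L[OF eS s] by simp
qed

lemma OP_imp: assumes op: "\<forall>s\<in>S. \<forall>t\<in>S. nat_le S mS s t \<longrightarrow> nat_le U mU (\<rho> s) (\<rho> t)"
  and s: "s \<in> S" and e: "e \<in> idems S mS"
  shows "mU (\<rho> s) (\<rho> e) = \<rho> (mS s e) \<and> mU (\<rho> e) (\<rho> s) = \<rho> (mS e s)"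
proof
  have eS: "e \<in> S" using e SS.idemsD by auto
  have sU: "\<rho> s \<in> U" and eU: "\<rho> e \<in> U" using rho_in s eS by auto
  have eE: "\<rho> e \<in> idems U mU" using rho_idem e by simp
  have jss: "j (sinv U mU (\<rho> s)) = sinv S mS s" using j_inv sU j_rho s by simp
  show "mU (\<rho> e) (\<rho> s) = \<rho> (mS e s)"
  proof -
    have "nat_le S mS (mS e s) s" unfolding nat_le_def using e eS s by auto
    then have "nat_le U mU (\<rho> (mS e s)) (\<rho> s)" using op s eS by simp
    then obtain g where g: "g \<in> idems U mU" and eq: "\<rho> (mS e s) = mU g (\<rho> s)"
      unfolding nat_le_def by blast
    define w where "w = \<rho> (mS e s)"
    have wU: "w \<in> U" using w_def rho_in s eS by simp
    have w1: "w = mU (mU w (sinv U mU w)) (\<rho> s)" using UU.le_left[OF g sU] eq w_def by simp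
    have jw: "j w = mS e s" using w_def j_rho s eS by simp
    have c: "mS (mS s (sinv S mS s)) e = mS e (mS s (sinv S mS s))"
      using SS.idem_comm[OF SS.aa_idem[OF s] e] .
    have E1: "mU w (sinv U mU w) \<in> idems U mU" using UU.aa_idem wU by simp
    have E2: "mU (\<rho> e) (mU (\<rho> s) (sinv U mU (\<rho> s))) \<in> idems U mU"
      using UU.idem_mult[OF eE UU.aa_idem[OF sU]] .
    have "j (mU w (sinv U mU w)) = mS e (mS s (mS (sinv S mS s) e))"
      using j_m j_inv wU jw SS.inv_mult SS.inv_idem[OF e] s eS by simp
    also have "\<dots> = mS e (mS (mS s (sinv S mS s)) e)" using s eS by simp
    also have "\<dots> = mS e (mS s (sinv S mS s))" using c SS.idem2[OF e] s eS by simp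
    also have "\<dots> = j (mU (\<rho> e) (mU (\<rho> s) (sinv U mU (\<rho> s))))"
      using j_m sU eU jss j_rho s eS by simp
    finally have "mU w (sinv U mU w) = mU (\<rho> e) (mU (\<rho> s) (sinv U mU (\<rho> s)))"
      using sep[OF E1 E2] by simp
    then have "w = mU (mU (\<rho> e) (mU (\<rho> s) (sinv U mU (\<rho> s)))) (\<rho> s)" using w1 by simp
    also have "\<dots> = mU (\<rho> e) (\<rho> s)" using sU eU UU.inv1 by simp
    finally show ?thesis using w_def by simp
  qed
  \<comment> \<open>first: s e \<le> s\<close>
  show "mU (\<rho> s) (\<rho> e) = \<rho> (mS s e)"
  proof -
    define f where "f = mS s (mS e (sinv S mS s))"
    have fE: "f \<in> idems S mS"
    proof -
      have c: "mS (mS (sinv S mS s) s) e = mS e (mS (sinv S mS s) s)"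
        using SS.idem_comm[OF SS.a'a_idem[OF s] e] .
      have "mS f f = mS s (mS (mS e (mS (sinv S mS s) s)) (mS e (sinv S mS s)))"
        using f_def s eS by simp
      also have "\<dots> = mS s (mS (mS (mS (sinv S mS s) s) e) (mS e (sinv S mS s)))" using c by simp
      also have "\<dots> = mS s (mS (sinv S mS s) (mS s (mS e (mS e (sinv S mS s)))))" using s eS by simp
      also have "\<dots> = f" using f_def SS.idem2[OF e] s eS by simp
      finally show ?thesis using f_def s eS idems_def by fastforce
    qed
    have fs: "mS f s = mS s e"
    proof -
      have c: "mS (mS (sinv S mS s) s) e = mS e (mS (sinv S mS s) s)"
        using SS.idem_comm[OF SS.a'a_idem[OF s] e] .
      have "mS f s = mS s (mS e (mS (sinv S mS s) s))" using f_def s eS by simp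
      also have "\<dots> = mS s (mS (mS (sinv S mS s) s) e)" using c by simp
      also have "\<dots> = mS s e" using s eS by simp
      finally show ?thesis .
    qed
    have "nat_le S mS (mS s e) s" unfolding nat_le_def using fE fs eS s by force
    then have "nat_le U mU (\<rho> (mS s e)) (\<rho> s)" using op s eS by simp
    then obtain g where g: "g \<in> idems U mU" and eq: "\<rho> (mS s e) = mU g (\<rho> s)"
      unfolding nat_le_def by blast
    define w where "w = \<rho> (mS s e)"
    have wU: "w \<in> U" using w_def rho_in s eS by simp
    have w1: "w = mU (\<rho> s) (mU (sinv U mU w) w)" using UU.le_right[OF g sU] eq w_def by simp
    have jw: "j w = mS s e" using w_def j_rho s eS by simp
    have c: "mS (mS (sinv S mS s) s) e = mS e (mS (sinv S mS s) s)"
      using SS.idem_comm[OF SS.a'a_idem[OF s] e] .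
    have E1: "mU (sinv U mU w) w \<in> idems U mU" using UU.a'a_idem wU by simp
    have E2: "mU (mU (sinv U mU (\<rho> s)) (\<rho> s)) (\<rho> e) \<in> idems U mU"
      using UU.idem_mult[OF UU.a'a_idem[OF sU] eE] .
    have "j (mU (sinv U mU w) w) = mS e (mS (sinv S mS s) (mS s e))"
      using j_m j_inv wU jw SS.inv_mult SS.inv_idem[OF e] s eS by simp
    also have "\<dots> = mS e (mS (mS (sinv S mS s) s) e)" using s eS by simp
    also have "\<dots> = mS (mS (sinv S mS s) s) e" using c SS.idem2[OF e] s eS by simp
    also have "\<dots> = j (mU (mU (sinv U mU (\<rho> s)) (\<rho> s)) (\<rho> e))"
      using j_m sU eU jss j_rho s eS by simp
    finally have "mU (sinv U mU w) w = mU (mU (sinv U mU (\<rho> s)) (\<rho> s)) (\<rho> e)"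
      using sep[OF E1 E2] by simp
    then have "w = mU (\<rho> s) (mU (mU (sinv U mU (\<rho> s)) (\<rho> s)) (\<rho> e))" using w1 by simp
    also have "\<dots> = mU (\<rho> s) (\<rho> e)" using sU eU UU.inv1y by simp
    finally show ?thesis using w_def by simp
  qed
qed

lemma imp_OP: assumes sb: "\<forall>s\<in>S. \<forall>e\<in>idems S mS. mU (\<rho> e) (\<rho> s) = \<rho> (mS e s)"
  shows "\<forall>s\<in>S. \<forall>t\<in>S. nat_le S mS s t \<longrightarrow> nat_le U mU (\<rho> s) (\<rho> t)"
proof (intro ballI impI)
  fix s t assume s: "s \<in> S" and t: "t \<in> S" and le: "nat_le S mS s t"
  then obtain e where e: "e \<in> idems S mS" and se: "s = mS e t" unfolding nat_le_def by blast
  have "\<rho> s = mU (\<rho> e) (\<rho> t)" using sb t e se by simp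
  then show "nat_le U mU (\<rho> s) (\<rho> t)" unfolding nat_le_def
    using rho_in s t rho_idem e by blast
qed

end
lemma (in extc) main:
  shows "(\<forall>s\<in>S. \<forall>e\<in>idems S mS.
            ind_f A mA U mU S mS i \<rho> s e
              = ind_alpha A i \<rho> (mS (mS s e) (sinv S mS s)) \<and>
            ind_f A mA U mU S mS i \<rho> e s
              = ind_alpha A i \<rho> (mS (mS e s) (sinv S mS s)))
         \<longleftrightarrow> (\<forall>s\<in>S. \<forall>t\<in>S. nat_le S mS s t \<longrightarrow> nat_le U mU (\<rho> s) (\<rho> t))" (is "?L \<longleftrightarrow> ?R")
proof
  assume H: ?L
  have "\<forall>s\<in>S. \<forall>e\<in>idems S mS. mU (\<rho> e) (\<rho> s) = \<rho> (mS e s)"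
  proof (intro ballI)
    fix s e assume s: "s \<in> S" and e: "e \<in> idems S mS"
    have "ind_f A mA U mU S mS i \<rho> e s = ind_alpha A i \<rho> (mS (mS e s) (sinv S mS s))"
      using bspec[OF bspec[OF H s] e] by (rule conjunct2)
    then show "mU (\<rho> e) (\<rho> s) = \<rho> (mS e s)" by (rule iffD1[OF L2[OF s e]])
  qed
  then show ?R by (rule imp_OP)
next
  assume H: ?R
  show ?L
  proof (intro ballI conjI)
    fix s e assume s: "s \<in> S" and e: "e \<in> idems S mS"
    have P: "mU (\<rho> s) (\<rho> e) = \<rho> (mS s e)" "mU (\<rho> e) (\<rho> s) = \<rho> (mS e s)"
      using OP_imp[OF H s e] by (rule conjunct1, rule conjunct2)
    show "ind_f A mA U mU S mS i \<rho> s e = ind_alpha A i \<rho> (mS (mS s e) (sinv S mS s))"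
      by (rule iffD2[OF L1[OF s e] P(1)])
    show "ind_f A mA U mU S mS i \<rho> e s = ind_alpha A i \<rho> (mS (mS e s) (sinv S mS s))"
      by (rule iffD2[OF L2[OF s e] P(2)])
  qed
qed

theorem proposition3p23:
  fixes A :: "'a set" and mA :: "'a \<Rightarrow> 'a \<Rightarrow> 'a"
    and U :: "'u set" and mU :: "'u \<Rightarrow> 'u \<Rightarrow> 'u"
    and S :: "'s set" and mS :: "'s \<Rightarrow> 's \<Rightarrow> 's"
    and i :: "'a \<Rightarrow> 'u" and j :: "'u \<Rightarrow> 's" and \<rho> :: "'s \<Rightarrow> 'u"
  assumes ext: "is_extension A mA U mU S mS i j"
    and tr: "is_transversal U mU S mS j \<rho>"
  shows "(\<forall>s\<in>S. \<forall>e\<in>idems S mS.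
            ind_f A mA U mU S mS i \<rho> s e
              = ind_alpha A i \<rho> (mS (mS s e) (sinv S mS s)) \<and>
            ind_f A mA U mU S mS i \<rho> e s
              = ind_alpha A i \<rho> (mS (mS e s) (sinv S mS s)))
         \<longleftrightarrow> (\<forall>s\<in>S. \<forall>t\<in>S. nat_le S mS s t \<longrightarrow> nat_le U mU (\<rho> s) (\<rho> t))"
proof -
  have E: "extc A mA U mU S mS i j \<rho>" by (rule extc.intro[OF ext tr])
  show ?thesis by (rule extc.main[OF E])
qed

end
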